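(* Let $w\in[k]^n$ and let $m$ be a positive integer. If $\mathrm{LT}(w)\geq m$, then $w$ contains monotone twins of length $m$.
   Context: $[k]=\{1,\dots,k\}$; $w[i]$ is the $i$-th letter of $w$. Two subsequences of $w$ are twins if they are equal as words and use disjoint sets of positions of $w$; $\mathrm{LT}(w)$ is the maximum length of twins in $w$. Twins $w_1,w_2$ of length $m$, occupying positions $p_1<\dots<p_m$ and $p_1'<\dots<p_m'$ of $w$ respectively, are monotone if $p_i<p_i'$ for all $i$ (the $i$-th letter of $w_1$ precedes the $i$-th letter of $w_2$ in $w$). *)

theory Defs
  imports Main
begin

text \<open>Words over [k] = {1..k} are lists of naturals; positions are 0-based indices.
  A subsequence is given by a strictly increasing list of positions.\<close>

definition words :: "nat \<Rightarrow> nat \<Rightarrow> nat list set" where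
  "words k n = {w. length w = n \<and> set w \<subseteq> {1..k}}"

definition is_subseq_pos :: "'a list \<Rightarrow> nat list \<Rightarrow> bool" where
  "is_subseq_pos w P \<longleftrightarrow> sorted_wrt (<) P \<and> (\<forall>p\<in>set P. p < length w)"

definition twins :: "'a list \<Rightarrow> nat list \<Rightarrow> nat list \<Rightarrow> bool" where
  "twins w P Q \<longleftrightarrow> is_subseq_pos w P \<and> is_subseq_pos w Q \<and>
     set P \<inter> set Q = {} \<and> map ((!) w) P = map ((!) w) Q"

definition LT :: "'a list \<Rightarrow> nat" where
  "LT w = Max {length P | P Q. twins w P Q}"

definition monotone_twins :: "'a list \<Rightarrow> nat list \<Rightarrow> nat list \<Rightarrow> bool" where
  "monotone_twins w P Q \<longleftrightarrow> twins w P Q \<and> (\<forall>i < length P. P ! i < Q ! i)"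

end

theory Submission
  imports Defs
begin

lemma twins_len_bound:
  assumes "twins w P Q" shows "length P \<le> length w"
proof -
  have s: "sorted_wrt (<) P" "set P \<subseteq> {0..<length w}"
    using assms by (auto simp: twins_def is_subseq_pos_def)
  have "distinct P" using s(1) by (simp add: strict_sorted_iff)
  hence "length P = card (set P)" by (simp add: distinct_card)
  also have "\<dots> \<le> card {0..<length w}" using s(2) by (intro card_mono) auto
  finally show ?thesis by simp
qed

lemma LT_attained:
  "\<exists>P Q. twins w P Q \<and> length P = LT w"
proof -
  let ?S = "{length P | P Q. twins w P Q}"
  have "?S \<subseteq> {0..length w}" using twins_len_bound by fastforce
  hence fin: "finite ?S" by (rule finite_subset) simp
  have "twins w [] []" by (simp add: twins_def is_subseq_pos_def)
  hence ne: "?S \<noteq> {}" by blast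
  have "LT w \<in> ?S" unfolding LT_def using Max_in[OF fin ne] .
  then obtain P Q where "LT w = length P" "twins w P Q" by blast
  thus ?thesis by metis
qed

theorem lemma17:
  fixes w :: "nat list" and k n m :: nat
  assumes "w \<in> words k n" and "m > 0" and "LT w \<ge> m"
  shows "\<exists>P Q. monotone_twins w P Q \<and> length P = m"
proof -
  obtain P Q where tw: "twins w P Q" and lenP: "length P = LT w" using LT_attained by blast
  have lenQ: "length Q = length P" using tw unfolding twins_def by (metis length_map)
  have sP: "\<And>i j. i < j \<Longrightarrow> j < length P \<Longrightarrow> P!i < P!j"
    using tw by (auto simp: twins_def is_subseq_pos_def sorted_wrt_iff_nth_less)
  have sQ: "\<And>i j. i < j \<Longrightarrow> j < length P \<Longrightarrow> Q!i < Q!j"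
    using tw lenQ by (auto simp: twins_def is_subseq_pos_def sorted_wrt_iff_nth_less)
  have bP: "\<And>i. i < length P \<Longrightarrow> P!i < length w"
    using tw by (auto simp: twins_def is_subseq_pos_def)
  have bQ: "\<And>i. i < length P \<Longrightarrow> Q!i < length w"
    using tw lenQ by (auto simp: twins_def is_subseq_pos_def)
  have dj: "\<And>i j. i < length P \<Longrightarrow> j < length P \<Longrightarrow> P!i \<noteq> Q!j"
    using tw lenQ unfolding twins_def by (metis disjoint_iff nth_mem)
  have eq: "\<And>i. i < length P \<Longrightarrow> w!(P!i) = w!(Q!i)"
    using tw lenQ unfolding twins_def by (metis nth_map)
  have injP: "\<And>i j. i < length P \<Longrightarrow> j < length P \<Longrightarrow> i \<noteq> j \<Longrightarrow> P!i \<noteq> P!j"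
    using sP by (metis less_irrefl nat_neq_iff)
  have injQ: "\<And>i j. i < length P \<Longrightarrow> j < length P \<Longrightarrow> i \<noteq> j \<Longrightarrow> Q!i \<noteq> Q!j"
    using sQ by (metis less_irrefl nat_neq_iff)
  define P' where "P' = map (\<lambda>i. min (P!i) (Q!i)) [0..<m]"
  define Q' where "Q' = map (\<lambda>i. max (P!i) (Q!i)) [0..<m]"
  have mle: "m \<le> length P" using assms(3) lenP by simp
  have "sorted_wrt (<) P'"
    unfolding P'_def sorted_wrt_iff_nth_less using sP sQ mle
    by (auto simp: min_def) (meson order.strict_trans order_le_less_trans order_less_le_trans not_le)+
  moreover have "sorted_wrt (<) Q'"
    unfolding Q'_def sorted_wrt_iff_nth_less using sP sQ mle
    by (auto simp: max_def) (meson order.strict_trans order_le_less_trans order_less_le_trans not_le)+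
  moreover have "\<forall>p\<in>set P'. p < length w" unfolding P'_def using bP bQ mle by (auto simp: min_def)
  moreover have "\<forall>p\<in>set Q'. p < length w" unfolding Q'_def using bP bQ mle by (auto simp: max_def)
  moreover have "set P' \<inter> set Q' = {}"
  proof -
    { fix i j assume i: "i < m" and j: "j < m" and e: "min (P!i) (Q!i) = max (P!j) (Q!j)"
      have ii: "i < length P" "j < length P" using i j mle by auto
      have False
      proof (cases "i = j")
        case True thus ?thesis using e dj[OF ii(1) ii(1)] by (auto simp: min_def max_def split: if_splits)
      next
        case False thus ?thesis using e dj[OF ii(1) ii(2)] dj[OF ii(2) ii(1)] injP[OF ii] injQ[OF ii]
          by (auto simp: min_def max_def split: if_splits)
      qed }
    thus ?thesis unfolding P'_def Q'_def by auto
  qed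
  moreover have "map ((!) w) P' = map ((!) w) Q'"
    unfolding P'_def Q'_def using eq mle by (auto simp: min_def max_def)
  moreover have "\<forall>i < length P'. P'!i < Q'!i"
  proof (intro allI impI)
    fix i assume "i < length P'"
    hence i: "i < length P" using mle unfolding P'_def by simp
    have "P!i \<noteq> Q!i" using dj[OF i i] .
    thus "P'!i < Q'!i" unfolding P'_def Q'_def using \<open>i < length P'\<close> unfolding P'_def by (auto simp: min_def max_def)
  qed
  moreover have "length P' = m" unfolding P'_def by simp
  ultimately show ?thesis unfolding monotone_twins_def twins_def is_subseq_pos_def by blast
qed

end
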